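(* If a square matrix $A$ has a principal submatrix $A[\kappa]$ that is a Hurwitz-unstable $P^-_{FF}$ matrix, then $A$ is $D$-Hopf.
   Context: Hurwitz-unstable: at least one eigenvalue with positive real part. $P^-_0$ matrix: every nonzero $k\times k$ principal minor has sign $(-1)^k$. An $n\times n$ $P^-_0$ matrix $A$ is a $P^-_{FF}$ (Fisher–Fuller) matrix if there is a nested sequence of invertible principal submatrices $A[\kappa_1],\dots,A[\kappa_n]$ with $|\kappa_i|=i$ and $\kappa_{i-1}\subset\kappa_i$. Inertia: numbers of eigenvalues with negative, positive, zero real part. $A$ is $D$-Hopf if there exist an invertible $k\times k$ principal submatrix $A[\kappa]$ and positive diagonal $D_1,D_2$ with $\operatorname{inertia}(A[\kappa]D_1)\ne\operatorname{inertia}(A[\kappa]D_2)$. *)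

theory Defs
  imports "Jordan_Normal_Form.DL_Submatrix" "Jordan_Normal_Form.Char_Poly"
    "HOL-Computational_Algebra.Polynomial"
begin

text \<open>Real square matrices are Jordan_Normal_Form matrices of type real mat;
  indices are 0-based.\<close>

definition principal_sub :: "real mat \<Rightarrow> nat set \<Rightarrow> real mat" where
  "principal_sub A \<kappa> = submatrix A \<kappa> \<kappa>"

definition eigs :: "real mat \<Rightarrow> complex multiset" where
  "eigs M = proots (char_poly (map_mat complex_of_real M))"

definition inertia :: "real mat \<Rightarrow> nat \<times> nat \<times> nat" where
  "inertia M = (size (filter_mset (\<lambda>z. Re z < 0) (eigs M)),
                size (filter_mset (\<lambda>z. Re z > 0) (eigs M)),
                size (filter_mset (\<lambda>z. Re z = 0) (eigs M)))"

definition hurwitz_unstable :: "real mat \<Rightarrow> bool" where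
  "hurwitz_unstable M \<longleftrightarrow> (\<exists>z. eigenvalue (map_mat complex_of_real M) z \<and> Re z > 0)"

definition P0_minus :: "real mat \<Rightarrow> bool" where
  "P0_minus M \<longleftrightarrow> square_mat M \<and>
     (\<forall>\<alpha>. \<alpha> \<subseteq> {0..<dim_row M} \<longrightarrow> \<alpha> \<noteq> {} \<longrightarrow>
        det (principal_sub M \<alpha>) \<noteq> 0 \<longrightarrow>
        sgn (det (principal_sub M \<alpha>)) = (-1) ^ card \<alpha>)"

definition P_FF_minus :: "real mat \<Rightarrow> bool" where
  "P_FF_minus M \<longleftrightarrow> P0_minus M \<and>
     (\<exists>c :: nat \<Rightarrow> nat set.
        (\<forall>i\<in>{1..dim_row M}. c i \<subseteq> {0..<dim_row M} \<and> card (c i) = i \<and>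
                               det (principal_sub M (c i)) \<noteq> 0) \<and>
        (\<forall>i\<in>{2..dim_row M}. c (i - 1) \<subseteq> c i))"

definition pos_diag :: "nat \<Rightarrow> real mat \<Rightarrow> bool" where
  "pos_diag k D \<longleftrightarrow> D \<in> carrier_mat k k \<and> diagonal_mat D \<and> (\<forall>i<k. D $$ (i, i) > 0)"

definition D_Hopf :: "real mat \<Rightarrow> bool" where
  "D_Hopf A \<longleftrightarrow> (\<exists>\<kappa> D1 D2. \<kappa> \<subseteq> {0..<dim_row A} \<and> \<kappa> \<noteq> {} \<and>
      det (principal_sub A \<kappa>) \<noteq> 0 \<and>
      pos_diag (card \<kappa>) D1 \<and> pos_diag (card \<kappa>) D2 \<and>
      inertia (principal_sub A \<kappa> * D1) \<noteq> inertia (principal_sub A \<kappa> * D2))"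

end

theory Submission
  imports Defs
begin


lemma signof_sq: "(signof p :: 'a::ring_1) * signof p = 1"
  by (simp add: sign_def)

lemma det_perm_both:
  fixes A :: "'a::comm_ring_1 mat"
  assumes A: "A \<in> carrier_mat n n" and p: "p permutes {0..<n}"
  shows "det (mat n n (\<lambda>(i,j). A $$ (p i, p j))) = det A"
proof -
  have pn: "\<And>i. i < n \<Longrightarrow> p i < n" using p by (meson atLeastLessThan_iff permutes_in_image zero_le)
  define A1 where "A1 = mat n n (\<lambda>(i,j). A $$ (i, p j))"
  have A1: "A1 \<in> carrier_mat n n" unfolding A1_def by simp
  have "mat n n (\<lambda>(i,j). A $$ (p i, p j)) = mat n n (\<lambda>(i,j). A1 $$ (p i, j))"
    by (rule eq_matI, auto simp: A1_def pn)
  hence 1: "det (mat n n (\<lambda>(i,j). A $$ (p i, p j))) = signof p * det A1"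
    using det_permute_rows[OF A1 p] by simp
  have "transpose_mat A1 = mat n n (\<lambda>(i,j). transpose_mat A $$ (p i, j))"
    by (rule eq_matI, insert A, auto simp: A1_def pn)
  hence "det (transpose_mat A1) = signof p * det (transpose_mat A)"
    using det_permute_rows[of "transpose_mat A" n p] A p by simp
  hence 2: "det A1 = signof p * det A" using det_transpose[OF A1] det_transpose[OF A] by simp
  show ?thesis unfolding 1 2 by (simp add: mult.assoc[symmetric] signof_sq)
qed

lemma det_bij_reindex:
  fixes F :: "nat \<Rightarrow> nat \<Rightarrow> 'a::comm_ring_1"
  assumes f: "bij_betw f {0..<k} S" and g: "bij_betw g {0..<k} S"
  shows "det (mat k k (\<lambda>(i,j). F (f i) (f j))) = det (mat k k (\<lambda>(i,j). F (g i) (g j)))"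
proof -
  define p where "p i = (if i < k then inv_into {0..<k} f (g i) else i)" for i
  have "bij_betw (inv_into {0..<k} f \<circ> g) {0..<k} {0..<k}"
    using bij_betw_trans[OF g bij_betw_inv_into[OF f]] .
  hence "bij_betw p {0..<k} {0..<k}"
    by (rule bij_betw_cong[THEN iffD1, rotated], auto simp: p_def)
  hence pp: "p permutes {0..<k}" by (rule bij_imp_permutes, auto simp: p_def)
  have fp: "\<And>i. i < k \<Longrightarrow> f (p i) = g i"
  proof -
    fix i assume i: "i < k"
    have "g i \<in> f ` {0..<k}" using f g i by (auto simp: bij_betw_def)
    thus "f (p i) = g i" using i by (simp add: p_def f_inv_into_f)
  qed
  have pk: "\<And>i. i < k \<Longrightarrow> p i < k" using pp by (meson atLeastLessThan_iff permutes_in_image zero_le)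
  let ?A = "mat k k (\<lambda>(i,j). F (f i) (f j))"
  have "mat k k (\<lambda>(i,j). F (g i) (g j)) = mat k k (\<lambda>(i,j). ?A $$ (p i, p j))"
    by (rule eq_matI, auto simp: pk fp)
  thus ?thesis using det_perm_both[of ?A k p] pp by simp
qed



lemma gershgorin:
  fixes Y :: "complex mat"
  assumes Y: "Y \<in> carrier_mat m m" and ev: "eigenvalue Y l"
  shows "\<exists>i<m. cmod (l - Y$$(i,i)) \<le> (\<Sum>j\<in>{0..<m}-{i}. cmod (Y$$(i,j)))"
proof -
  from ev obtain v where v: "v \<in> carrier_vec m" "v \<noteq> 0\<^sub>v m" "Y *\<^sub>v v = l \<cdot>\<^sub>v v"
    unfolding eigenvalue_def eigenvector_def using Y by auto
  obtain j0 where j0: "j0 < m" "v $ j0 \<noteq> 0"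
    using v(1,2) by (metis eq_vecI carrier_vecD index_zero_vec(1) index_zero_vec(2))
  hence mpos: "m > 0" by auto
  define mx where "mx = Max ((\<lambda>j. cmod (v $ j)) ` {0..<m})"
  have "mx \<in> (\<lambda>j. cmod (v $ j)) ` {0..<m}" unfolding mx_def using mpos by (intro Max_in, auto)
  then obtain i where i: "i < m" "cmod (v $ i) = mx" by auto
  have ge: "\<And>j. j < m \<Longrightarrow> cmod (v $ j) \<le> cmod (v $ i)" unfolding i mx_def by (intro Max_ge, auto)
  have vi: "cmod (v $ i) > 0" using ge[OF j0(1)] j0(2) by (smt (verit) norm_le_zero_iff)
  have "(Y *\<^sub>v v) $ i = (\<Sum>j\<in>{0..<m}. Y$$(i,j) * v$j)"
    using Y v(1) i by (simp add: scalar_prod_def)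
  also have "\<dots> = Y$$(i,i) * v$i + (\<Sum>j\<in>{0..<m}-{i}. Y$$(i,j) * v$j)"
    using i by (subst sum.remove[of _ i], auto)
  finally have "l * v$i = Y$$(i,i) * v$i + (\<Sum>j\<in>{0..<m}-{i}. Y$$(i,j) * v$j)"
    using v i by simp
  hence eq: "(l - Y$$(i,i)) * v$i = (\<Sum>j\<in>{0..<m}-{i}. Y$$(i,j) * v$j)"
    by (simp add: algebra_simps)
  have "cmod (l - Y$$(i,i)) * cmod (v$i) = cmod (\<Sum>j\<in>{0..<m}-{i}. Y$$(i,j) * v$j)"
    using eq by (metis norm_mult)
  also have "\<dots> \<le> (\<Sum>j\<in>{0..<m}-{i}. cmod (Y$$(i,j)) * cmod (v$j))"
    by (rule order_trans[OF norm_sum], simp add: norm_mult)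
  also have "\<dots> \<le> (\<Sum>j\<in>{0..<m}-{i}. cmod (Y$$(i,j)) * cmod (v$i))"
    by (rule sum_mono, rule mult_left_mono, auto intro: ge)
  also have "\<dots> = (\<Sum>j\<in>{0..<m}-{i}. cmod (Y$$(i,j))) * cmod (v$i)"
    by (simp add: sum_distrib_right)
  finally have "cmod (l - Y$$(i,i)) \<le> (\<Sum>j\<in>{0..<m}-{i}. cmod (Y$$(i,j)))"
    using vi by simp
  thus ?thesis using i by auto
qed

definition diagm :: "nat \<Rightarrow> (nat \<Rightarrow> 'a::zero) \<Rightarrow> 'a mat" where
  "diagm m d = mat m m (\<lambda>(i,j). if i = j then d i else 0)"

lemma diagm_carrier[simp]: "diagm m d \<in> carrier_mat m m" by (simp add: diagm_def)
lemma diagm_dim[simp]: "dim_row (diagm m d) = m" "dim_col (diagm m d) = m" by (simp_all add: diagm_def)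

lemma mult_diagm_right:
  fixes A :: "'a::comm_semiring_1 mat"
  assumes A: "A \<in> carrier_mat n m"
  shows "A * diagm m d = mat n m (\<lambda>(i,j). A$$(i,j) * d j)"
proof (rule eq_matI)
  fix i j assume ij: "i < dim_row (mat n m (\<lambda>(i,j). A$$(i,j) * d j))" "j < dim_col (mat n m (\<lambda>(i,j). A$$(i,j) * d j))"
  have "(A * diagm m d) $$ (i,j) = (\<Sum>k\<in>{0..<m}. A$$(i,k) * (if k = j then d k else 0))"
    using A ij by (simp add: scalar_prod_def diagm_def)
  also have "\<dots> = A$$(i,j) * d j" using ij by (simp add: if_distrib cong: if_cong)
  finally show "(A * diagm m d) $$ (i,j) = mat n m (\<lambda>(i,j). A$$(i,j) * d j) $$ (i,j)" using ij by simp
qed (insert A, auto)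

lemma mult_diagm_left:
  fixes A :: "'a::comm_semiring_1 mat"
  assumes A: "A \<in> carrier_mat n m"
  shows "diagm n d * A = mat n m (\<lambda>(i,j). d i * A$$(i,j))"
proof (rule eq_matI)
  fix i j assume ij: "i < dim_row (mat n m (\<lambda>(i,j). d i * A$$(i,j)))" "j < dim_col (mat n m (\<lambda>(i,j). d i * A$$(i,j)))"
  have "(diagm n d * A) $$ (i,j) = (\<Sum>k\<in>{0..<n}. (if i = k then d i else 0) * A$$(k,j))"
    using A ij by (simp add: scalar_prod_def diagm_def)
  also have "\<dots> = (\<Sum>k\<in>{0..<n}. (if i = k then d i * A$$(i,j) else 0))"
    by (rule sum.cong, auto)
  also have "\<dots> = d i * A$$(i,j)" using ij by (simp)
  finally show "(diagm n d * A) $$ (i,j) = mat n m (\<lambda>(i,j). d i * A$$(i,j)) $$ (i,j)" using ij by simp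
qed (insert A, auto)



lemma det_inv_exists:
  fixes A :: "'a::field mat"
  assumes A: "A \<in> carrier_mat n n" and d: "det A \<noteq> 0"
  shows "\<exists>B. B \<in> carrier_mat n n \<and> A * B = 1\<^sub>m n \<and> B * A = 1\<^sub>m n"
  using det_non_zero_imp_unit[OF A d, of "()"] unfolding Units_def
  by (auto simp: ring_mat_simps)

definition lead :: "'a mat \<Rightarrow> nat \<Rightarrow> 'a mat" where
  "lead A k = mat k k (\<lambda>(i,j). A $$ (i,j))"

lemma row_solve:
  fixes Bp :: "real mat"
  assumes Bp: "Bp \<in> carrier_mat m m" and k: "k < m" and d: "det (lead Bp k) \<noteq> 0"
  shows "\<exists>a. \<forall>j<k. (\<Sum>i\<in>{0..<k}. a i * Bp$$(i,j)) = - Bp$$(k,j)"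
proof -
  define T where "T = transpose_mat (lead Bp k)"
  have T: "T \<in> carrier_mat k k" unfolding T_def lead_def by simp
  have "det T \<noteq> 0" unfolding T_def using det_transpose[of "lead Bp k" k] d by (simp add: lead_def)
  from det_inv_exists[OF T this] obtain Ti where Ti: "Ti \<in> carrier_mat k k" "T * Ti = 1\<^sub>m k" by auto
  define b where "b = vec k (\<lambda>j. - Bp$$(k,j))"
  define x where "x = Ti *\<^sub>v b"
  have b: "b \<in> carrier_vec k" unfolding b_def by simp
  have "T *\<^sub>v x = b" unfolding x_def
    using assoc_mult_mat_vec[OF T Ti(1) b, symmetric] Ti(2) b by simp
  hence eq: "\<And>j. j < k \<Longrightarrow> (T *\<^sub>v x) $ j = b $ j" by simp
  show ?thesis
  proof (intro exI[of _ "\<lambda>i. x $ i"] allI impI)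
    fix j assume j: "j < k"
    have "(T *\<^sub>v x) $ j = (\<Sum>i\<in>{0..<k}. Bp$$(i,j) * x $ i)"
      using T j Ti b by (simp add: x_def scalar_prod_def T_def lead_def)
    thus "(\<Sum>i\<in>{0..<k}. x $ i * Bp$$(i,j)) = - Bp$$(k,j)"
      using eq[OF j] j by (simp add: b_def mult.commute)
  qed
qed

lemma lu_exists:
  fixes Bp :: "real mat"
  assumes Bp: "Bp \<in> carrier_mat m m" and lead: "\<forall>k\<in>{1..m}. det (lead Bp k) \<noteq> 0"
  shows "\<exists>M. M \<in> carrier_mat m m \<and> (\<forall>i<m. M$$(i,i) = 1) \<and> (\<forall>i j. i < j \<longrightarrow> j < m \<longrightarrow> M$$(i,j) = 0)
     \<and> upper_triangular (M * Bp)"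
proof -
  have "\<forall>k. \<exists>a. k < m \<longrightarrow> (\<forall>j<k. (\<Sum>i\<in>{0..<k}. a i * Bp$$(i,j)) = - Bp$$(k,j))"
  proof
    fix k
    show "\<exists>a. k < m \<longrightarrow> (\<forall>j<k. (\<Sum>i\<in>{0..<k}. a i * Bp$$(i,j)) = - Bp$$(k,j))"
    proof (cases "k = 0")
      case True thus ?thesis by auto
    next
      case False
      show ?thesis
      proof (cases "k < m")
        case True
        with False lead have "det (lead Bp k) \<noteq> 0" by auto
        from row_solve[OF Bp True this] show ?thesis by auto
      qed auto
    qed
  qed
  then obtain a where a: "\<And>k j. k < m \<Longrightarrow> j < k \<Longrightarrow> (\<Sum>i\<in>{0..<k}. a k i * Bp$$(i,j)) = - Bp$$(k,j)"
    by metis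
  define M where "M = mat m m (\<lambda>(i,j). if i = j then 1 else if j < i then a i j else 0)"
  have M: "M \<in> carrier_mat m m" unfolding M_def by simp
  have "upper_triangular (M * Bp)"
  proof (rule upper_triangularI)
    fix i j assume ji: "j < i" and i: "i < dim_row (M * Bp)"
    hence im: "i < m" and jm: "j < m" using M by auto
    have "(M * Bp) $$ (i,j) = (\<Sum>l\<in>{0..<m}. M$$(i,l) * Bp$$(l,j))"
      using M Bp im jm by (simp add: scalar_prod_def)
    also have "\<dots> = (\<Sum>l\<in>{0..<m}. (if l = i then Bp$$(i,j) else if l < i then a i l * Bp$$(l,j) else 0))"
      by (rule sum.cong, auto simp: M_def im)
    also have "\<dots> = (\<Sum>l\<in>{0..<m}. (if l = i then Bp$$(i,j) else 0)) + (\<Sum>l\<in>{0..<m}. (if l < i then a i l * Bp$$(l,j) else 0))"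
      by (subst sum.distrib[symmetric], rule sum.cong, auto)
    also have "(\<Sum>l\<in>{0..<m}. (if l < i then a i l * Bp$$(l,j) else 0)) = (\<Sum>l\<in>{0..<i}. a i l * Bp$$(l,j))"
      using im by (simp add: sum.If_cases) (rule sum.cong, auto)
    also have "\<dots> = - Bp$$(i,j)" using a[OF im ji] .
    finally show "(M * Bp) $$ (i,j) = 0" using im by simp
  qed
  thus ?thesis using M by (intro exI[of _ M], auto simp: M_def)
qed



lemma lower_mult_expand:
  fixes M L :: "'a::comm_ring_1 mat"
  assumes M: "M \<in> carrier_mat m m" and L: "L \<in> carrier_mat m m"
    and Md: "\<forall>i<m. M$$(i,i) = 1" and Ml: "\<forall>i j. i < j \<longrightarrow> j < m \<longrightarrow> M$$(i,j) = 0"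
    and i: "i < m" and j: "j < m"
  shows "(M * L) $$ (i,j) = L$$(i,j) + (\<Sum>l\<in>{0..<i}. M$$(i,l) * L$$(l,j))"
proof -
  have "(M * L) $$ (i,j) = (\<Sum>l\<in>{0..<m}. M$$(i,l) * L$$(l,j))"
    using M L i j by (simp add: scalar_prod_def)
  also have "\<dots> = (\<Sum>l\<in>{0..<m}. (if l = i then L$$(i,j) else 0) + (if l < i then M$$(i,l) * L$$(l,j) else 0))"
    by (rule sum.cong, insert Md Ml i, auto)
  also have "\<dots> = L$$(i,j) + (\<Sum>l\<in>{0..<i}. M$$(i,l) * L$$(l,j))"
    using i by (simp add: sum.distrib sum.If_cases Int_absorb1 subset_eq) (rule sum.cong, auto)
  finally show ?thesis .
qed

lemma inverse_lower:
  fixes M :: "real mat"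
  assumes M: "M \<in> carrier_mat m m"
    and Md: "\<forall>i<m. M$$(i,i) = 1" and Ml: "\<forall>i j. i < j \<longrightarrow> j < m \<longrightarrow> M$$(i,j) = 0"
  shows "\<exists>L. L \<in> carrier_mat m m \<and> M * L = 1\<^sub>m m \<and> L * M = 1\<^sub>m m \<and>
     (\<forall>i j. i < j \<longrightarrow> j < m \<longrightarrow> L$$(i,j) = 0) \<and> (\<forall>i<m. L$$(i,i) = 1)"
proof -
  have "det M = prod_list (diag_mat M)" by (rule det_lower_triangular[OF _ M], insert Ml, auto)
  also have "\<dots> = 1" unfolding prod_list_diag_prod using M Md by simp
  finally have "det M \<noteq> 0" by simp
  from det_inv_exists[OF M this] obtain L where L: "L \<in> carrier_mat m m" "M * L = 1\<^sub>m m" "L * M = 1\<^sub>m m" by auto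
  have exp: "\<And>i j. i < m \<Longrightarrow> j < m \<Longrightarrow> L$$(i,j) + (\<Sum>l\<in>{0..<i}. M$$(i,l) * L$$(l,j)) = (if i = j then 1 else 0)"
    using lower_mult_expand[OF M L(1) Md Ml] L(2) by simp
  have low: "\<forall>j. i < j \<longrightarrow> j < m \<longrightarrow> L$$(i,j) = 0" for i
  proof (induction i rule: less_induct)
    case (less i)
    show ?case
    proof (intro allI impI)
      fix j assume ij: "i < j" "j < m"
      have "(\<Sum>l\<in>{0..<i}. M$$(i,l) * L$$(l,j)) = 0"
        by (rule sum.neutral, insert less ij, auto)
      thus "L$$(i,j) = 0" using exp[of i j] ij by simp
    qed
  qed
  have diag: "L$$(j,j) = 1" if j: "j < m" for j
  proof -
    have "(\<Sum>l\<in>{0..<j}. M$$(j,l) * L$$(l,j)) = 0"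
      by (rule sum.neutral, insert low j, auto)
    thus ?thesis using exp[of j j] j by simp
  qed
  show ?thesis using L low diag by blast
qed

lemma lead_mult:
  fixes M B :: "'a::comm_ring_1 mat"
  assumes M: "M \<in> carrier_mat m m" and B: "B \<in> carrier_mat m m"
    and Ml: "\<forall>i j. i < j \<longrightarrow> j < m \<longrightarrow> M$$(i,j) = 0" and k: "k \<le> m"
  shows "lead (M * B) k = lead M k * lead B k"
proof (rule eq_matI)
  fix i j assume i: "i < dim_row (lead M k * lead B k)" and j: "j < dim_col (lead M k * lead B k)"
  hence ik: "i < k" and jk: "j < k" by (auto simp: lead_def)
  have "lead (M * B) k $$ (i,j) = (\<Sum>l\<in>{0..<m}. M$$(i,l) * B$$(l,j))"
    using M B ik jk k by (simp add: lead_def scalar_prod_def)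
  also have "\<dots> = (\<Sum>l\<in>{0..<k}. M$$(i,l) * B$$(l,j))"
  proof -
    have "{0..<m} = {0..<k} \<union> {k..<m}" using k by auto
    moreover have "(\<Sum>l\<in>{k..<m}. M$$(i,l) * B$$(l,j)) = 0"
      by (rule sum.neutral, insert Ml ik, auto)
    ultimately show ?thesis by (simp add: sum.union_disjoint)
  qed
  also have "\<dots> = (lead M k * lead B k) $$ (i,j)"
    using ik jk by (simp add: lead_def scalar_prod_def)
  finally show "lead (M * B) k $$ (i,j) = (lead M k * lead B k) $$ (i,j)" .
qed (auto simp: lead_def)

lemma diag_neg:
  fixes M Bp :: "real mat"
  assumes M: "M \<in> carrier_mat m m" and Bp: "Bp \<in> carrier_mat m m"
    and Md: "\<forall>i<m. M$$(i,i) = 1" and Ml: "\<forall>i j. i < j \<longrightarrow> j < m \<longrightarrow> M$$(i,j) = 0"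
    and U: "upper_triangular (M * Bp)"
    and sg: "\<forall>k\<in>{1..m}. sgn (det (lead Bp k)) = (-1)^k"
  shows "\<forall>i<m. (M * Bp)$$(i,i) < 0"
proof -
  let ?U = "M * Bp"
  have Uc: "?U \<in> carrier_mat m m" using M Bp by simp
  have P: "(\<Prod>i\<in>{0..<k}. ?U$$(i,i)) = det (lead Bp k)" if k: "k \<le> m" for k
  proof -
    have "det (lead ?U k) = prod_list (diag_mat (lead ?U k))"
      by (rule det_upper_triangular, insert U k Uc, auto simp: lead_def upper_triangular_def)
    also have "\<dots> = (\<Prod>i\<in>{0..<k}. ?U$$(i,i))" unfolding prod_list_diag_prod using k Uc by (simp add: lead_def)
    finally have 1: "det (lead ?U k) = (\<Prod>i\<in>{0..<k}. ?U$$(i,i))" .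
    have "det (lead M k) = prod_list (diag_mat (lead M k))"
      by (rule det_lower_triangular[of k], insert Ml k, auto simp: lead_def)
    also have "\<dots> = 1" unfolding prod_list_diag_prod using k Md by (simp add: lead_def)
    finally have 2: "det (lead M k) = 1" .
    have "det (lead ?U k) = det (lead M k) * det (lead Bp k)"
      unfolding lead_mult[OF M Bp Ml k] by (rule det_mult, auto simp: lead_def)
    thus ?thesis using 1 2 by simp
  qed
  have sgP: "sgn (\<Prod>i\<in>{0..<k}. ?U$$(i,i)) = (-1)^k" if k: "k \<le> m" for k
  proof (cases "k = 0")
    case True thus ?thesis by simp
  next
    case False thus ?thesis using P[OF k] sg k by auto
  qed
  show ?thesis
  proof (intro allI impI)
    fix i assume i: "i < m"
    have "sgn (\<Prod>j\<in>{0..<Suc i}. ?U$$(j,j)) = sgn (\<Prod>j\<in>{0..<i}. ?U$$(j,j)) * sgn (?U$$(i,i))"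
      by (simp add: sgn_mult)
    hence "(-1)^(Suc i) = (-1)^i * sgn (?U$$(i,i))" using sgP[of i] sgP[of "Suc i"] i by simp
    hence "(-1)^i * sgn (?U$$(i,i)) = (-1)^i * (-1::real)" by simp
    hence "sgn (?U$$(i,i)) = -1" by (subst (asm) mult_left_cancel, simp_all)
    thus "?U$$(i,i) < 0" by (simp add: sgn_real_def split: if_splits)
  qed
qed



definition Ymat :: "real mat \<Rightarrow> real mat \<Rightarrow> real \<Rightarrow> nat \<Rightarrow> real mat" where
  "Ymat U L e m = mat m m (\<lambda>(i,j). (\<Sum>k\<in>{0..<m}. U$$(i,k) * L$$(k,j) * (e^(2*k) * e^i / e^j)))"

lemma Ymat_carrier[simp]: "Ymat U L e m \<in> carrier_mat m m" by (simp add: Ymat_def)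

lemma sim_Y:
  fixes Bp M L :: "real mat"
  assumes Bp: "Bp \<in> carrier_mat m m" and M: "M \<in> carrier_mat m m" and L: "L \<in> carrier_mat m m"
    and LMinv: "L * M = 1\<^sub>m m" and MLinv: "M * L = 1\<^sub>m m" and e: "e > 0"
  shows "similar_mat (Bp * diagm m (\<lambda>k. e^(2*k))) (Ymat (M * Bp) L e m)"
proof -
  define U where "U = M * Bp"
  define D where "D = diagm m (\<lambda>k. e^(2*k))"
  have U: "U \<in> carrier_mat m m" using M Bp by (simp add: U_def)
  have D: "D \<in> carrier_mat m m" by (simp add: D_def)
  define X where "X = U * D * L"
  have X: "X \<in> carrier_mat m m" using U D L by (simp add: X_def)
  have LU: "L * U = Bp" unfolding U_def
    using assoc_mult_mat[OF L M Bp, symmetric] LMinv Bp by simp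
  have "L * X * M = L * (U * D * L) * M" by (simp add: X_def)
  also have "\<dots> = L * U * D * (L * M)"
    using L U D M by (simp add: assoc_mult_mat[of _ m m _ m _ m])
  also have "\<dots> = Bp * D" using LU LMinv Bp D by simp
  finally have eq1: "Bp * D = L * X * M" by simp
  have s1: "similar_mat (Bp * D) X"
    unfolding similar_mat_def
    by (rule exI[of _ L], rule exI[of _ M], unfold similar_mat_wit_def Let_def,
        insert Bp D X L M LMinv MLinv eq1, auto)
  define S where "S = diagm m (\<lambda>i. 1 / e^i)"
  define Si where "Si = diagm m (\<lambda>i. e^i)"
  have S: "S \<in> carrier_mat m m" "Si \<in> carrier_mat m m" by (auto simp: S_def Si_def)
  have e0: "e \<noteq> 0" using e by simp
  have SSi0: "S * Si = mat m m (\<lambda>(i,j). 1/e^i * Si$$(i,j))" unfolding S_def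
    by (rule mult_diagm_left) (simp add: Si_def)
  have SSi: "S * Si = 1\<^sub>m m" unfolding SSi0 by (auto intro!: eq_matI simp: Si_def diagm_def e0)
  have SiS0: "Si * S = mat m m (\<lambda>(i,j). e^i * S$$(i,j))" unfolding Si_def
    by (rule mult_diagm_left) (simp add: S_def)
  have SiS: "Si * S = 1\<^sub>m m" unfolding SiS0 by (auto intro!: eq_matI simp: S_def diagm_def e0)
  let ?Y = "Ymat U L e m"
  have Xe: "X $$ (i,j) = (\<Sum>k\<in>{0..<m}. U$$(i,k) * L$$(k,j) * e^(2*k))" if ij: "i < m" "j < m" for i j
  proof -
    have "U * D = mat m m (\<lambda>(i,k). U$$(i,k) * e^(2*k))" unfolding D_def by (rule mult_diagm_right[OF U])
    hence "X $$ (i,j) = (\<Sum>k\<in>{0..<m}. (U$$(i,k) * e^(2*k)) * L$$(k,j))"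
      unfolding X_def using ij L by (simp add: scalar_prod_def)
    thus ?thesis by (simp add: mult_ac)
  qed
  have eq2: "X = S * ?Y * Si"
  proof -
    have SY: "S * ?Y = mat m m (\<lambda>(i,j). 1 / e^i * ?Y $$ (i,j))" unfolding S_def by (rule mult_diagm_left, simp)
    have "S * ?Y * Si = mat m m (\<lambda>(i,j). 1 / e^i * ?Y $$ (i,j) * e^j)"
      unfolding SY Si_def by (subst mult_diagm_right[of _ m m], simp, rule eq_matI, auto)
    also have "\<dots> = X"
    proof (rule eq_matI)
      fix i j assume i: "i < dim_row X" and j: "j < dim_col X"
      hence ij: "i < m" "j < m" using X by auto
      have "1 / e^i * ?Y $$ (i,j) * e^j = (\<Sum>k\<in>{0..<m}. 1 / e^i * (U$$(i,k) * L$$(k,j) * (e^(2*k) * e^i / e^j)) * e^j)"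
        using ij by (simp add: Ymat_def sum_distrib_left sum_distrib_right)
      also have "\<dots> = (\<Sum>k\<in>{0..<m}. U$$(i,k) * L$$(k,j) * e^(2*k))"
        by (rule sum.cong, insert e, auto simp: field_simps)
      finally show "mat m m (\<lambda>(i,j). 1 / e^i * ?Y $$ (i,j) * e^j) $$ (i,j) = X $$ (i,j)"
        using ij Xe by simp
    qed (insert X, auto)
    finally show ?thesis by simp
  qed
  have s2: "similar_mat X ?Y"
    unfolding similar_mat_def
    by (rule exI[of _ S], rule exI[of _ Si], unfold similar_mat_wit_def Let_def,
        insert X S SSi SiS eq2, auto)
  show ?thesis using similar_mat_trans[OF s1 s2] unfolding D_def U_def .
qed



lemma eig_transfer:
  fixes A Y :: "real mat"
  assumes A: "A \<in> carrier_mat m m" and Y: "Y \<in> carrier_mat m m" and s: "similar_mat A Y"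
    and ev: "eigenvalue (map_mat complex_of_real A) l"
  shows "eigenvalue (map_mat complex_of_real Y) l"
proof -
  have hA: "char_poly (map_mat complex_of_real A) = map_poly complex_of_real (char_poly A)"
    by (rule of_real_hom.char_poly_hom[OF A])
  have hY: "char_poly (map_mat complex_of_real Y) = map_poly complex_of_real (char_poly Y)"
    by (rule of_real_hom.char_poly_hom[OF Y])
  have "poly (char_poly (map_mat complex_of_real A)) l = 0"
    using ev eigenvalue_root_char_poly[of "map_mat complex_of_real A" m] A by simp
  hence "poly (map_poly complex_of_real (char_poly A)) l = 0"
    using hA by simp
  hence "poly (map_poly complex_of_real (char_poly Y)) l = 0"
    using char_poly_similar[OF s] by simp
  hence "poly (char_poly (map_mat complex_of_real Y)) l = 0"
    using hY by simp
  thus ?thesis using eigenvalue_root_char_poly[of "map_mat complex_of_real Y" m] Y by simp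
qed

lemma no_eig_0:
  fixes A :: "'a::comm_ring_1 mat"
  assumes "A \<in> carrier_mat 0 0" shows "\<not> eigenvalue A l"
proof
  assume "eigenvalue A l"
  then obtain v where "v \<in> carrier_vec 0" "v \<noteq> 0\<^sub>v 0" using assms
    unfolding eigenvalue_def eigenvector_def by auto
  thus False by (metis eq_vecI carrier_vecD index_zero_vec(2) less_nat_zero_code)
qed

lemma stab_core:
  fixes Bp M L :: "real mat"
  assumes Bp: "Bp \<in> carrier_mat m m" and M: "M \<in> carrier_mat m m" and L: "L \<in> carrier_mat m m"
    and LMinv: "L * M = 1\<^sub>m m" and MLinv: "M * L = 1\<^sub>m m"
    and Uup: "upper_triangular (M * Bp)" and Uneg: "\<forall>i<m. (M * Bp)$$(i,i) < 0"
    and Ll: "\<forall>i j. i < j \<longrightarrow> j < m \<longrightarrow> L$$(i,j) = 0" and Ld: "\<forall>i<m. L$$(i,i) = 1"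
  shows "\<exists>d. (\<forall>i<m. d i > 0) \<and> (\<forall>l. eigenvalue (map_mat complex_of_real (Bp * diagm m d)) l \<longrightarrow> Re l < 0)"
proof (cases "m = 0")
  case True
  have "map_mat complex_of_real (Bp * diagm m (\<lambda>_. 1)) \<in> carrier_mat 0 0" using Bp True by simp
  thus ?thesis
    by (intro exI[of _ "\<lambda>_. 1"], insert True no_eig_0, blast)
next
  case False
  hence m0: "m > 0" by simp
  define U where "U = M * Bp"
  have U: "U \<in> carrier_mat m m" using M Bp by (simp add: U_def)
  define C where "C = (\<Sum>i\<in>{0..<m}. \<Sum>j\<in>{0..<m}. \<Sum>k\<in>{0..<m}. \<bar>U$$(i,k) * L$$(k,j)\<bar>)"
  define u0 where "u0 = Min ((\<lambda>i. - U$$(i,i)) ` {0..<m})"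
  have u0pos: "u0 > 0" unfolding u0_def using m0 Uneg by (subst Min_gr_iff, auto simp: U_def)
  have u0le: "\<And>i. i < m \<Longrightarrow> u0 \<le> - U$$(i,i)" unfolding u0_def by (rule Min_le, auto)
  have C0: "C \<ge> 0" unfolding C_def by (intro sum_nonneg, auto)
  have Cge: "(\<Sum>k\<in>{0..<m}. \<bar>U$$(i,k) * L$$(k,j)\<bar>) \<le> C" if ij: "i < m" "j < m" for i j
  proof -
    have "(\<Sum>k\<in>{0..<m}. \<bar>U$$(i,k) * L$$(k,j)\<bar>) \<le> (\<Sum>j\<in>{0..<m}. \<Sum>k\<in>{0..<m}. \<bar>U$$(i,k) * L$$(k,j)\<bar>)"
      by (rule member_le_sum[of j _ "\<lambda>j. \<Sum>k\<in>{0..<m}. \<bar>U$$(i,k) * L$$(k,j)\<bar>"], insert ij, auto intro: sum_nonneg)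
    also have "\<dots> \<le> C" unfolding C_def
      by (rule member_le_sum[of i _ "\<lambda>i. \<Sum>j\<in>{0..<m}. \<Sum>k\<in>{0..<m}. \<bar>U$$(i,k) * L$$(k,j)\<bar>"], insert ij, auto intro: sum_nonneg)
    finally show ?thesis .
  qed
  define K where "K = (real m + 1) * C"
  have K0: "K \<ge> 0" unfolding K_def using C0 by simp
  define e where "e = min (1/2) (u0 / (K + 1))"
  have e0: "e > 0" unfolding e_def using u0pos K0 by simp
  have e1: "e \<le> 1" unfolding e_def by simp
  have Ke: "K * e < u0"
  proof -
    have "K * e \<le> K * (u0 / (K + 1))" unfolding e_def using K0 by (intro mult_left_mono, auto)
    also have "\<dots> < u0" using K0 u0pos by (simp add: field_simps)
    finally show ?thesis .
  qed
  define Y where "Y = Ymat U L e m"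
  have Y: "Y \<in> carrier_mat m m" by (simp add: Y_def)
  define t where "t i j k = U$$(i,k) * L$$(k,j) * (e^(2*k) * e^i / e^j)" for i j k
  have Yij: "Y$$(i,j) = (\<Sum>k\<in>{0..<m}. t i j k)" if "i < m" "j < m" for i j
    using that by (simp add: Y_def Ymat_def t_def)
  have tb: "\<bar>t i j k\<bar> \<le> \<bar>U$$(i,k) * L$$(k,j)\<bar> * e^(2*i+1)"
    if ijk: "i < m" "j < m" "k < m" "j \<noteq> i \<or> k \<noteq> i" for i j k
  proof (cases "U$$(i,k) * L$$(k,j) = 0")
    case True
    hence "t i j k = 0" unfolding t_def by simp
    thus ?thesis using True e0 by simp
  next
    case False
    hence "U$$(i,k) \<noteq> 0" "L$$(k,j) \<noteq> 0" by auto
    hence ik: "i \<le> k" and jk: "j \<le> k" using Uup ijk Ll U unfolding U_def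
      by (metis carrier_matD(1) not_le upper_triangularD, metis not_le)
    have "e^(2*k) * e^i = e^(2*k+i-j) * e^j" using jk by (simp add: power_add[symmetric])
    hence pe: "e^(2*k) * e^i / e^j = e^(2*k+i-j)" using e0 by simp
    have "2*i+1 \<le> 2*k+i-j" using ik jk ijk(4) by linarith
    hence "e^(2*k+i-j) \<le> e^(2*i+1)" using e0 e1 by (intro power_decreasing, auto)
    thus ?thesis unfolding t_def pe abs_mult using e0
      by (intro mult_left_mono, auto)
  qed
  have offb: "\<bar>Y$$(i,j)\<bar> \<le> C * e^(2*i+1)" if ij: "i < m" "j < m" "j \<noteq> i" for i j
  proof -
    have "\<bar>Y$$(i,j)\<bar> \<le> (\<Sum>k\<in>{0..<m}. \<bar>t i j k\<bar>)" unfolding Yij[OF ij(1,2)] by (rule sum_abs)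
    also have "\<dots> \<le> (\<Sum>k\<in>{0..<m}. \<bar>U$$(i,k) * L$$(k,j)\<bar> * e^(2*i+1))"
      by (rule sum_mono, rule tb, insert ij, auto)
    also have "\<dots> \<le> C * e^(2*i+1)" unfolding sum_distrib_right[symmetric]
      using Cge[OF ij(1,2)] e0 by (intro mult_right_mono, auto)
    finally show ?thesis .
  qed
  have diagb: "Y$$(i,i) \<le> U$$(i,i) * e^(2*i) + C * e^(2*i+1)" if i: "i < m" for i
  proof -
    have "Y$$(i,i) = t i i i + (\<Sum>k\<in>{0..<m}-{i}. t i i k)"
      unfolding Yij[OF i i] using i by (subst sum.remove[of _ i], auto)
    also have "t i i i = U$$(i,i) * e^(2*i)" using Ld i e0 by (simp add: t_def)
    also have "(\<Sum>k\<in>{0..<m}-{i}. t i i k) \<le> (\<Sum>k\<in>{0..<m}-{i}. \<bar>U$$(i,k) * L$$(k,i)\<bar> * e^(2*i+1))"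
      by (rule sum_mono, rule order_trans[OF abs_ge_self tb], insert i, auto)
    also have "\<dots> \<le> (\<Sum>k\<in>{0..<m}. \<bar>U$$(i,k) * L$$(k,i)\<bar> * e^(2*i+1))"
      by (rule sum_mono2, insert e0, auto)
    also have "\<dots> \<le> C * e^(2*i+1)" unfolding sum_distrib_right[symmetric]
      using Cge[OF i i] e0 by (intro mult_right_mono, auto)
    finally show ?thesis by simp
  qed
  show ?thesis
  proof (intro exI[of _ "\<lambda>k. e^(2*k)"] conjI allI impI)
    fix i assume "i < m" thus "e^(2*i) > 0" using e0 by simp
  next
    fix l assume ev: "eigenvalue (map_mat complex_of_real (Bp * diagm m (\<lambda>k. e^(2*k)))) l"
    have "similar_mat (Bp * diagm m (\<lambda>k. e^(2*k))) Y"
      unfolding Y_def U_def by (rule sim_Y[OF Bp M L LMinv MLinv e0])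
    from eig_transfer[OF _ Y this ev] Bp
    have ev2: "eigenvalue (map_mat complex_of_real Y) l" by simp
    have Yc: "map_mat complex_of_real Y \<in> carrier_mat m m" using Y by simp
    from gershgorin[OF Yc ev2] obtain i where i: "i < m"
      and g: "cmod (l - map_mat complex_of_real Y $$ (i,i)) \<le> (\<Sum>j\<in>{0..<m}-{i}. cmod (map_mat complex_of_real Y $$ (i,j)))"
      by blast
    have "(\<Sum>j\<in>{0..<m}-{i}. cmod (map_mat complex_of_real Y $$ (i,j))) = (\<Sum>j\<in>{0..<m}-{i}. \<bar>Y$$(i,j)\<bar>)"
      by (rule sum.cong, insert Y i, auto)
    also have "\<dots> \<le> (\<Sum>j\<in>{0..<m}-{i}. C * e^(2*i+1))"
      by (rule sum_mono, rule offb, insert i, auto)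
    also have "\<dots> \<le> real m * (C * e^(2*i+1))"
    proof -
      have "card ({0..<m} - {i}) \<le> m" using card_Diff1_le[of "{0..<m}" i] by simp
      thus ?thesis using C0 e0 by (simp, intro mult_right_mono, auto)
    qed
    finally have g2: "cmod (l - complex_of_real (Y$$(i,i))) \<le> real m * (C * e^(2*i+1))"
      using g Y i by simp
    have "Re l = Y$$(i,i) + Re (l - complex_of_real (Y$$(i,i)))" by simp
    also have "\<dots> \<le> Y$$(i,i) + cmod (l - complex_of_real (Y$$(i,i)))"
      by (rule add_left_mono[OF complex_Re_le_cmod])
    also have "\<dots> \<le> U$$(i,i) * e^(2*i) + C * e^(2*i+1) + real m * (C * e^(2*i+1))"
      using diagb[OF i] g2 by simp
    also have "\<dots> = e^(2*i) * (U$$(i,i) + K * e)" unfolding K_def by (simp add: field_simps)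
    also have "\<dots> < 0"
    proof -
      have "U$$(i,i) + K * e < 0" using Ke u0le[OF i] by simp
      thus ?thesis using e0 by (simp add: mult_pos_neg)
    qed
    finally show "Re l < 0" .
  qed
qed



lemma in_eigs:
  assumes A: "A \<in> carrier_mat m m"
  shows "z \<in># eigs A \<longleftrightarrow> eigenvalue (map_mat complex_of_real A) z"
proof -
  let ?A = "map_mat complex_of_real A"
  have Ac: "?A \<in> carrier_mat m m" using A by simp
  have "coeff (char_poly ?A) m = 1" using degree_monic_char_poly[OF Ac] by simp
  hence nz: "char_poly ?A \<noteq> 0" by auto
  have "z \<in># eigs A \<longleftrightarrow> poly (char_poly ?A) z = 0"
    unfolding eigs_def using set_count_proots[OF nz] by blast
  also have "\<dots> \<longleftrightarrow> eigenvalue ?A z" using eigenvalue_root_char_poly[OF Ac] by simp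
  finally show ?thesis .
qed

lemma eig_transfer_cp:
  fixes A Y :: "real mat"
  assumes A: "A \<in> carrier_mat m m" and Y: "Y \<in> carrier_mat m m" and s: "char_poly A = char_poly Y"
    and ev: "eigenvalue (map_mat complex_of_real A) l"
  shows "eigenvalue (map_mat complex_of_real Y) l"
proof -
  have hA: "char_poly (map_mat complex_of_real A) = map_poly complex_of_real (char_poly A)"
    by (rule of_real_hom.char_poly_hom[OF A])
  have hY: "char_poly (map_mat complex_of_real Y) = map_poly complex_of_real (char_poly Y)"
    by (rule of_real_hom.char_poly_hom[OF Y])
  have "poly (char_poly (map_mat complex_of_real A)) l = 0"
    using ev eigenvalue_root_char_poly[of "map_mat complex_of_real A" m] A by simp
  hence "poly (char_poly (map_mat complex_of_real Y)) l = 0"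
    using hA hY s by simp
  thus ?thesis using eigenvalue_root_char_poly[of "map_mat complex_of_real Y" m] Y by simp
qed

lemma char_poly_perm:
  fixes X :: "'a::comm_ring_1 mat"
  assumes X: "X \<in> carrier_mat m m" and p: "p permutes {0..<m}"
  shows "char_poly (mat m m (\<lambda>(i,j). X$$(p i, p j))) = char_poly X"
proof -
  have pm: "\<And>i. i < m \<Longrightarrow> p i < m" using p by (meson atLeastLessThan_iff permutes_in_image zero_le)
  have pinj: "\<And>i j. p i = p j \<longleftrightarrow> i = j" using p by (meson permutes_inj injD)
  let ?CX = "char_poly_matrix X"
  have CX: "?CX \<in> carrier_mat m m" using X by simp
  have "char_poly_matrix (mat m m (\<lambda>(i,j). X$$(p i, p j))) = mat m m (\<lambda>(i,j). ?CX $$ (p i, p j))"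
    by (rule eq_matI, insert X pm, auto simp: char_poly_matrix_def pinj)
  thus ?thesis unfolding char_poly_def using det_perm_both[OF CX p] by simp
qed

lemma pick_bij:
  assumes fin: "finite S"
  shows "bij_betw (pick S) {0..<card S} S"
proof -
  have inj: "inj_on (pick S) {0..<card S}"
  proof (rule inj_onI)
    fix a b assume a: "a \<in> {0..<card S}" and b: "b \<in> {0..<card S}" and eq: "pick S a = pick S b"
    show "a = b"
    proof (rule ccontr)
      assume "a \<noteq> b"
      hence "a < b \<or> b < a" by auto
      thus False using pick_mono[of b S a] pick_mono[of a S b] a b eq by auto
    qed
  qed
  have sub: "pick S ` {0..<card S} \<subseteq> S" using pick_in_set by auto
  have "card (pick S ` {0..<card S}) = card S" using card_image[OF inj] by simp
  hence "pick S ` {0..<card S} = S" using card_subset_eq[OF fin sub] by simp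
  thus ?thesis using inj unfolding bij_betw_def by simp
qed

lemma chain_perm:
  assumes c1: "\<forall>i\<in>{1..m}. c i \<subseteq> {0..<m} \<and> card (c i) = i"
    and c2: "\<forall>i\<in>{2..m}. c (i-1) \<subseteq> c i"
  shows "\<exists>p. p permutes {0..<m} \<and> (\<forall>k\<in>{1..m}. bij_betw p {0..<k} (c k))"
proof -
  define C where "C k = (if k = 0 then {} else c k)" for k
  have Csub: "C k \<subseteq> {0..<m}" if "k \<le> m" for k using c1 that by (auto simp: C_def)
  have Cfin: "finite (C k)" if "k \<le> m" for k using Csub[OF that] finite_subset by blast
  have Ccard: "card (C k) = k" if "k \<le> m" for k using c1 that by (auto simp: C_def)
  have Cmono: "C k \<subseteq> C (Suc k)" if "k < m" for k
  proof (cases "k = 0")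
    case True thus ?thesis by (simp add: C_def)
  next
    case False
    hence "Suc k \<in> {2..m}" using that by auto
    hence "c (Suc k - 1) \<subseteq> c (Suc k)" using c2 by blast
    thus ?thesis using False by (simp add: C_def)
  qed
  have "\<forall>k. \<exists>x. k < m \<longrightarrow> (x \<notin> C k \<and> C (Suc k) = insert x (C k))"
  proof
    fix k
    show "\<exists>x. k < m \<longrightarrow> (x \<notin> C k \<and> C (Suc k) = insert x (C k))"
    proof (cases "k < m")
      case True
      have "card (C (Suc k) - C k) = card (C (Suc k)) - card (C k)"
        by (rule card_Diff_subset, insert Cfin Cmono True, auto)
      also have "\<dots> = 1" using Ccard True by simp
      finally obtain x where x: "C (Suc k) - C k = {x}" by (metis One_nat_def card_1_singleton_iff)
      hence "x \<notin> C k \<and> C (Suc k) = insert x (C k)" using Cmono[OF True] by auto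
      thus ?thesis by auto
    qed auto
  qed
  then obtain q where q: "\<And>k. k < m \<Longrightarrow> q k \<notin> C k \<and> C (Suc k) = insert (q k) (C k)" by metis
  have img: "k \<le> m \<Longrightarrow> q ` {0..<k} = C k" for k
  proof (induction k)
    case 0 thus ?case by (simp add: C_def)
  next
    case (Suc k)
    have "q ` {0..<Suc k} = insert (q k) (q ` {0..<k})" by (simp add: atLeast0_lessThan_Suc)
    also have "\<dots> = C (Suc k)" using Suc q[of k] by simp
    finally show ?case .
  qed
  have qbij: "bij_betw q {0..<k} (C k)" if k: "k \<le> m" for k
  proof -
    have "card (q ` {0..<k}) = card {0..<k}" using img[OF k] Ccard[OF k] by simp
    hence "inj_on q {0..<k}" by (rule eq_card_imp_inj_on[rotated], simp)
    thus ?thesis using img[OF k] unfolding bij_betw_def by simp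
  qed
  have Cm: "C m = {0..<m}" using card_subset_eq[of "{0..<m}" "C m"] Csub[of m] Ccard[of m] by simp
  define p where "p i = (if i < m then q i else i)" for i
  have pbij: "bij_betw p {0..<k} (C k)" if k: "k \<le> m" for k
    using qbij[OF k] by (rule bij_betw_cong[THEN iffD1, rotated], insert k, auto simp: p_def)
  have "p permutes {0..<m}"
    by (rule bij_imp_permutes, insert pbij[of m] Cm, auto simp: p_def)
  moreover have "\<forall>k\<in>{1..m}. bij_betw p {0..<k} (c k)"
  proof
    fix k assume k: "k \<in> {1..m}"
    hence "C k = c k" by (simp add: C_def)
    thus "bij_betw p {0..<k} (c k)" using pbij[of k] k by simp
  qed
  ultimately show ?thesis by blast
qed



theorem mainTheorem6:
  fixes A :: "real mat" and n :: nat and \<kappa> :: "nat set"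
  assumes "A \<in> carrier_mat n n"
    and "\<kappa> \<subseteq> {0..<n}"
    and "P_FF_minus (principal_sub A \<kappa>)"
    and "hurwitz_unstable (principal_sub A \<kappa>)"
  shows "D_Hopf A"
proof -
  define B where "B = principal_sub A \<kappa>"
  define m where "m = card \<kappa>"
  have An: "dim_row A = n" "dim_col A = n" using assms(1) by auto
  have kset: "{i. i < n \<and> i \<in> \<kappa>} = \<kappa>" using assms(2) by auto
  have Bc: "B \<in> carrier_mat m m" unfolding B_def principal_sub_def submatrix_def
    using kset An by (simp add: m_def)
  have Bsub: "principal_sub B S = mat (card S) (card S) (\<lambda>(i,j). B$$(pick S i, pick S j))"
    if S: "S \<subseteq> {0..<m}" for S
  proof -
    have "{i. i < dim_row B \<and> i \<in> S} = S" using S Bc by auto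
    thus ?thesis unfolding principal_sub_def submatrix_def using Bc by simp
  qed
  from assms(3) obtain c where P0: "P0_minus B"
    and c1: "\<forall>i\<in>{1..m}. c i \<subseteq> {0..<m} \<and> card (c i) = i \<and> det (principal_sub B (c i)) \<noteq> 0"
    and c2: "\<forall>i\<in>{2..m}. c (i - 1) \<subseteq> c i"
    unfolding P_FF_minus_def B_def[symmetric] using Bc by auto
  from assms(4) obtain z where z: "eigenvalue (map_mat complex_of_real B) z" "Re z > 0"
    unfolding hurwitz_unstable_def B_def[symmetric] by auto
  have m0: "m > 0"
  proof (rule ccontr)
    assume "\<not> m > 0"
    hence "map_mat complex_of_real B \<in> carrier_mat 0 0" using Bc by simp
    thus False using no_eig_0 z(1) by blast
  qed
  from chain_perm[of m c] c1 c2 obtain p where p: "p permutes {0..<m}"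
    and pb: "\<forall>k\<in>{1..m}. bij_betw p {0..<k} (c k)" by auto
  have pm: "\<And>i. i < m \<Longrightarrow> p i < m" using p by (meson atLeastLessThan_iff permutes_in_image zero_le)
  define Bp where "Bp = mat m m (\<lambda>(i,j). B$$(p i, p j))"
  have Bpc: "Bp \<in> carrier_mat m m" by (simp add: Bp_def)
  have leadeq: "det (lead Bp k) = det (principal_sub B (c k))" if k: "k \<in> {1..m}" for k
  proof -
    have ck: "c k \<subseteq> {0..<m}" "card (c k) = k" using c1 k by auto
    have fin: "finite (c k)" using ck(1) finite_subset by blast
    have 1: "lead Bp k = mat k k (\<lambda>(i,j). B$$(p i, p j))"
      by (rule eq_matI, insert k, auto simp: lead_def Bp_def)
    have 2: "principal_sub B (c k) = mat k k (\<lambda>(i,j). B$$(pick (c k) i, pick (c k) j))"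
      using Bsub[OF ck(1)] ck(2) by simp
    have "bij_betw (pick (c k)) {0..<k} (c k)" using pick_bij[OF fin] ck(2) by simp
    from det_bij_reindex[OF pb[rule_format, OF k] this, of "\<lambda>a b. B$$(a,b)"]
    show ?thesis unfolding 1 2 by simp
  qed
  have ldet: "\<forall>k\<in>{1..m}. det (lead Bp k) \<noteq> 0" using leadeq c1 by auto
  have sg: "\<forall>k\<in>{1..m}. sgn (det (lead Bp k)) = (-1)^k"
  proof
    fix k assume k: "k \<in> {1..m}"
    have ck: "c k \<subseteq> {0..<m}" "card (c k) = k" "det (principal_sub B (c k)) \<noteq> 0" using c1 k by auto
    have "c k \<noteq> {}" using ck(2) k by auto
    hence "sgn (det (principal_sub B (c k))) = (-1)^card (c k)"
      using P0 ck Bc unfolding P0_minus_def by auto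
    thus "sgn (det (lead Bp k)) = (-1)^k" using leadeq[OF k] ck(2) by simp
  qed
  from lu_exists[OF Bpc ldet] obtain M where M: "M \<in> carrier_mat m m" "\<forall>i<m. M$$(i,i) = 1"
    "\<forall>i j. i < j \<longrightarrow> j < m \<longrightarrow> M$$(i,j) = 0" "upper_triangular (M * Bp)" by auto
  have Uneg: "\<forall>i<m. (M * Bp)$$(i,i) < 0" by (rule diag_neg[OF M(1) Bpc M(2,3,4) sg])
  from inverse_lower[OF M(1,2,3)] obtain L where L: "L \<in> carrier_mat m m" "M * L = 1\<^sub>m m" "L * M = 1\<^sub>m m"
    "\<forall>i j. i < j \<longrightarrow> j < m \<longrightarrow> L$$(i,j) = 0" "\<forall>i<m. L$$(i,i) = 1" by auto
  from stab_core[OF Bpc M(1) L(1) L(3) L(2) M(4) Uneg L(4) L(5)] obtain d where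
    d: "\<forall>i<m. d i > 0" "\<forall>l. eigenvalue (map_mat complex_of_real (Bp * diagm m d)) l \<longrightarrow> Re l < 0" by auto
  define D2 where "D2 = diagm m (\<lambda>i. d (Hilbert_Choice.inv p i))"
  have D2c: "D2 \<in> carrier_mat m m" by (simp add: D2_def)
  have BD: "B * D2 = mat m m (\<lambda>(i,j). B$$(i,j) * d (Hilbert_Choice.inv p j))" unfolding D2_def by (rule mult_diagm_right[OF Bc])
  have BpD: "Bp * diagm m d = mat m m (\<lambda>(i,j). Bp$$(i,j) * d j)" by (rule mult_diagm_right[OF Bpc])
  have perm_eq: "mat m m (\<lambda>(i,j). (B * D2)$$(p i, p j)) = Bp * diagm m d"
    unfolding BD BpD by (rule eq_matI, auto simp: pm Bp_def permutes_inverses(2)[OF p])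
  have BD2c: "B * D2 \<in> carrier_mat m m" using Bc D2c by simp
  have cp: "char_poly (B * D2) = char_poly (Bp * diagm m d)"
    using char_poly_perm[OF BD2c p] unfolding perm_eq by simp
  have stable: "Re l < 0" if "eigenvalue (map_mat complex_of_real (B * D2)) l" for l
    using eig_transfer_cp[OF BD2c _ cp that] Bpc d(2) by simp
  have in1: "size (filter_mset (\<lambda>z. Re z > 0) (eigs (B * 1\<^sub>m m))) \<noteq> 0"
  proof -
    have "z \<in># eigs B" using in_eigs[OF Bc] z(1) by simp
    hence "z \<in># filter_mset (\<lambda>z. Re z > 0) (eigs (B * 1\<^sub>m m))" using z(2) Bc by simp
    thus ?thesis by auto
  qed
  have in2: "size (filter_mset (\<lambda>z. Re z > 0) (eigs (B * D2))) = 0"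
  proof -
    have "filter_mset (\<lambda>z. Re z > 0) (eigs (B * D2)) = {#}"
      unfolding filter_mset_eq_mempty_iff using in_eigs[OF BD2c] stable by fastforce
    thus ?thesis by simp
  qed
  have f: "\<And>X. fst (snd (inertia X)) = size (filter_mset (\<lambda>z. Re z > 0) (eigs X))"
    unfolding inertia_def by simp
  have ineq: "inertia (B * 1\<^sub>m m) \<noteq> inertia (B * D2)"
  proof
    assume eq: "inertia (B * 1\<^sub>m m) = inertia (B * D2)"
    have "fst (snd (inertia (B * 1\<^sub>m m))) = fst (snd (inertia (B * D2)))" using eq by simp
    thus False unfolding f using in1 in2 by simp
  qed
  have detB: "det B \<noteq> 0"
  proof -
    have "lead Bp m = Bp" by (rule eq_matI, auto simp: lead_def Bp_def)
    moreover have "m \<in> {1..m}" using m0 by auto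
    ultimately have "det Bp \<noteq> 0" using ldet by metis
    thus ?thesis using det_perm_both[OF Bc p] unfolding Bp_def by simp
  qed
  have pd1: "pos_diag m (1\<^sub>m m)" unfolding pos_diag_def diagonal_mat_def by auto
  have pd2: "pos_diag m D2" unfolding pos_diag_def diagonal_mat_def D2_def
    using d(1) permutes_inv[OF p] by (auto simp: diagm_def permutes_in_image)
  have kne: "\<kappa> \<noteq> {}" using m0 unfolding m_def by auto
  show ?thesis unfolding D_Hopf_def
    by (rule exI[of _ \<kappa>], rule exI[of _ "1\<^sub>m m"], rule exI[of _ D2],
        insert assms(2) An kne detB pd1 pd2 ineq, auto simp: B_def m_def)
qed

end
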